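(* Let $\mathcal S$ be a finite state set with $n = |\mathcal S|$, and let $\mathcal S_T\subset\mathcal S$ be a nonempty set of terminal states with $m=|\mathcal S_T|$. Let $\mathbf P$ be an $n\times n$ row-stochastic matrix (the transition matrix induced by a default policy) in which every terminal state is absorbing: $\mathbf P(s_T,s_T)=1$ for all $s_T\in\mathcal S_T$. Fix $\lambda>0$ and rewards $r(s)<0$ for all non-terminal $s\in\mathcal S\setminus\mathcal S_T$, and for $\delta>0$ set $r(s_T) = -\delta$ for every $s_T\in\mathcal S_T$. Let $\mathbf R_\delta = \operatorname{diag}(\exp(-\mathbf r/\lambda))$ and $\mathbf Z_\delta = (\mathbf R_\delta - \mathbf P)^{-1}$ (the default representation). Then, as $\delta\to 0^+$, the columns of $\mathbf Z_\delta$ corresponding to the terminal states form a basis of the eigenspace of the principal eigenvalue of $\mathbf Z_\delta$. Precisely: $\mathbf R_\delta-\mathbf P$ is invertible for every $\delta>0$; there is $\delta_0>0$ such that for all $\delta\in(0,\delta_0)$ the eigenvalue of $\mathbf Z_\delta$ of largest modulus is $1/(e^{\delta/\lambda}-1)$ and its eigenspace $\mathcal E_\delta$ has dimension $m$; the span $\mathcal C_\delta$ of the $m$ columns of $\mathbf Z_\delta$ indexed by $\mathcal S_T$ has dimension $m$; and $\mathcal C_\delta$ converges to $\mathcal E_\delta$ as $\delta\to0^+$, in the sense that $\|\Pi_{\mathcal C_\delta} - \Pi_{\mathcal E_\delta}\|\to 0$, where $\Pi_{\mathcal W}$ denotes the orthogonal projector onto a subspace $\mathcal W$.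
   Context: $\exp$ and $\operatorname{diag}$ act entrywise, so $\mathbf R_\delta$ is the diagonal matrix with entries $e^{-r(s)/\lambda}$. The principal eigenvalue of a matrix is its eigenvalue of largest modulus. The matrix $\mathbf Z_\delta$ is not symmetrized here. *)

theory Defs
  imports "HOL-Analysis.Analysis"
begin

definition row_stochastic :: "real^'n^'n \<Rightarrow> bool" where
  "row_stochastic P \<longleftrightarrow> (\<forall>i j. 0 \<le> P$i$j) \<and> (\<forall>i. (\<Sum>j\<in>UNIV. P$i$j) = 1)"

definition reward_delta :: "'n set \<Rightarrow> ('n \<Rightarrow> real) \<Rightarrow> real \<Rightarrow> 'n \<Rightarrow> real" where
  "reward_delta T r \<delta> s = (if s \<in> T then - \<delta> else r s)"

definition R_mat :: "'n set \<Rightarrow> ('n \<Rightarrow> real) \<Rightarrow> real \<Rightarrow> real \<Rightarrow> real^'n^'n" where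
  "R_mat T r lam \<delta> = (\<chi> i j. if i = j then exp (- reward_delta T r \<delta> i / lam) else 0)"

definition Z_mat :: "'n set \<Rightarrow> ('n \<Rightarrow> real) \<Rightarrow> real \<Rightarrow> real^'n^'n \<Rightarrow> real \<Rightarrow> real^'n^'n" where
  "Z_mat T r lam P \<delta> = matrix_inv (R_mat T r lam \<delta> - P)"

definition cmat :: "real^'n^'m \<Rightarrow> complex^'n^'m" where
  "cmat A = (\<chi> i j. complex_of_real (A$i$j))"

definition is_eigenvalue :: "real^'n^'n \<Rightarrow> complex \<Rightarrow> bool" where
  "is_eigenvalue A z \<longleftrightarrow> (\<exists>v::complex^'n. v \<noteq> 0 \<and> cmat A *v v = z *s v)"

definition eigenspace :: "real^'n^'n \<Rightarrow> real \<Rightarrow> (real^'n) set" where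
  "eigenspace A \<mu> = {v. A *v v = \<mu> *\<^sub>R v}"

definition orth_proj :: "('a::euclidean_space) set \<Rightarrow> 'a \<Rightarrow> 'a" where
  "orth_proj W x = (THE p. p \<in> W \<and> (\<forall>w\<in>W. (x - p) \<bullet> w = 0))"

end

theory Submission
  imports Defs
begin

lemma exists_max_comp:
  fixes x :: "'b::real_normed_vector^'n"
  obtains k where "\<And>i. norm (x$i) \<le> norm (x$k)"
proof -
  let ?S = "range (\<lambda>i. norm (x$i))"
  have "Max ?S \<in> ?S" by (rule Max_in) auto
  then obtain k where k: "Max ?S = norm (x$k)" by blast
  have "\<And>i. norm (x$i) \<le> norm (x$k)" unfolding k[symmetric] by (rule Max_ge) auto
  then show ?thesis using that by blast
qed

lemma norm_le_sqrt_card_max: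
  fixes x :: "real^'n"
  assumes "\<And>i. \<bar>x$i\<bar> \<le> \<bar>x$k\<bar>"
  shows "norm x \<le> sqrt (real CARD('n)) * \<bar>x$k\<bar>"
proof -
  have "(norm x)\<^sup>2 = (\<Sum>i\<in>UNIV. (x$i)\<^sup>2)"
    by (simp only: dot_square_norm[symmetric]) (simp add: inner_vec_def power2_eq_square)
  also have "\<dots> \<le> (\<Sum>i\<in>(UNIV::'n set). (x$k)\<^sup>2)"
    by (rule sum_mono) (use assms in \<open>simp add: abs_le_square_iff\<close>)
  also have "\<dots> = (sqrt (real CARD('n)) * \<bar>x$k\<bar>)\<^sup>2"
    by (simp add: power_mult_distrib)
  finally show ?thesis
    by (rule power2_le_imp_le) simp
qed

lemma dd_lower:
  fixes A :: "real^'n^'n"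
  assumes g: "\<gamma> > 0" and dd: "\<And>i. A$i$i - (\<Sum>j\<in>UNIV-{i}. \<bar>A$i$j\<bar>) \<ge> \<gamma>"
  shows "\<gamma> * norm x \<le> sqrt (real CARD('n)) * norm (A *v x)"
proof -
  obtain k where k: "\<And>i. norm (x$i) \<le> norm (x$k)" using exists_max_comp by blast
  then have k': "\<And>i. \<bar>x$i\<bar> \<le> \<bar>x$k\<bar>" by simp
  have "(\<Sum>j\<in>UNIV-{k}. \<bar>A$k$j\<bar>) \<ge> 0" by (rule sum_nonneg) simp
  then have Akk: "A$k$k \<ge> \<gamma>" using dd[of k] by linarith
  have f1: "(A *v x)$k = A$k$k * x$k + (\<Sum>j\<in>UNIV-{k}. A$k$j * x$j)"
    by (simp add: matrix_vector_mult_def sum.remove[of UNIV k])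
  have f2: "\<bar>\<Sum>j\<in>UNIV-{k}. A$k$j * x$j\<bar> \<le> (\<Sum>j\<in>UNIV-{k}. \<bar>A$k$j\<bar>) * \<bar>x$k\<bar>"
  proof -
    have "\<bar>\<Sum>j\<in>UNIV-{k}. A$k$j * x$j\<bar> \<le> (\<Sum>j\<in>UNIV-{k}. \<bar>A$k$j * x$j\<bar>)" by (rule sum_abs)
    also have "\<dots> \<le> (\<Sum>j\<in>UNIV-{k}. \<bar>A$k$j\<bar> * \<bar>x$k\<bar>)"
      by (rule sum_mono) (simp add: abs_mult k' mult_left_mono)
    finally show ?thesis by (simp add: sum_distrib_right)
  qed
  have "\<gamma> * \<bar>x$k\<bar> \<le> (A$k$k - (\<Sum>j\<in>UNIV-{k}. \<bar>A$k$j\<bar>)) * \<bar>x$k\<bar>"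
    using dd[of k] by (simp add: mult_right_mono)
  also have "\<dots> = A$k$k * \<bar>x$k\<bar> - (\<Sum>j\<in>UNIV-{k}. \<bar>A$k$j\<bar>) * \<bar>x$k\<bar>" by (simp add: algebra_simps)
  also have "\<dots> \<le> \<bar>(A *v x)$k\<bar>"
  proof -
    have "\<bar>A$k$k * x$k\<bar> = A$k$k * \<bar>x$k\<bar>" using Akk g by (simp add: abs_mult)
    then show ?thesis using f1 f2
      by (smt (verit, best) abs_triangle_ineq2_sym abs_minus_commute abs_triangle_ineq)
  qed
  also have "\<dots> \<le> norm (A *v x)" by (rule component_le_norm_cart)
  finally have 1: "\<gamma> * \<bar>x$k\<bar> \<le> norm (A *v x)" .
  have "\<gamma> * norm x \<le> \<gamma> * (sqrt (real CARD('n)) * \<bar>x$k\<bar>)"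
    using norm_le_sqrt_card_max[OF k'] g by simp
  also have "\<dots> = sqrt (real CARD('n)) * (\<gamma> * \<bar>x$k\<bar>)" by simp
  also have "\<dots> \<le> sqrt (real CARD('n)) * norm (A *v x)" using 1 by (simp add: mult_left_mono)
  finally show ?thesis .
qed

lemma dd_inj:
  fixes A :: "real^'n^'n"
  assumes g: "\<gamma> > 0" and dd: "\<And>i. A$i$i - (\<Sum>j\<in>UNIV-{i}. \<bar>A$i$j\<bar>) \<ge> \<gamma>"
  shows "invertible A"
proof -
  have "inj ((*v) A)"
  proof (rule injI)
    fix x y assume "A *v x = A *v y"
    then have "A *v (x - y) = 0" by (simp add: matrix_vector_mult_diff_distrib)
    then have "\<gamma> * norm (x - y) \<le> 0" using dd_lower[OF g dd, of "x - y"] by simp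
    then show "x = y" using g by (simp add: mult_le_0_iff)
  qed
  then show ?thesis by (simp add: invertible_left_inverse matrix_left_invertible_injective)
qed

lemma matrix_inv_props:
  fixes A :: "real^'n^'n"
  assumes "invertible A"
  shows "A ** matrix_inv A = mat 1" "matrix_inv A ** A = mat 1"
proof -
  have "\<exists>A'. A ** A' = mat 1 \<and> A' ** A = mat 1" using assms by (simp add: invertible_def)
  then have "A ** matrix_inv A = mat 1 \<and> matrix_inv A ** A = mat 1"
    unfolding matrix_inv_def by (rule someI_ex)
  then show "A ** matrix_inv A = mat 1" "matrix_inv A ** A = mat 1" by auto
qed

lemma matrix_inv_apply:
  fixes A :: "real^'n^'n"
  assumes "invertible A"
  shows "A *v (matrix_inv A *v x) = x" "matrix_inv A *v (A *v x) = x"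
  using matrix_inv_props[OF assms] by (simp_all add: matrix_vector_mul_assoc)

lemma coord_subspace:
  fixes M :: "real^'n^'n"
  assumes inv: "invertible M"
  shows "{y. \<forall>s. s \<notin> T \<longrightarrow> (M *v y)$s = 0} = span ((\<lambda>t. matrix_inv M *v axis t 1) ` T)"
proof
  let ?N = "matrix_inv M"
  let ?L = "{y. \<forall>s. s \<notin> T \<longrightarrow> (M *v y)$s = 0}"
  have sub: "subspace ?L"
    unfolding subspace_def
    by (simp add: matrix_vector_right_distrib matrix_vector_mult_scaleR)
  show "span ((\<lambda>t. ?N *v axis t 1) ` T) \<subseteq> ?L"
  proof (rule span_minimal[OF _ sub])
    show "(\<lambda>t. ?N *v axis t 1) ` T \<subseteq> ?L"
      using matrix_inv_apply[OF inv] by (auto simp: axis_def)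
  qed
  show "?L \<subseteq> span ((\<lambda>t. ?N *v axis t 1) ` T)"
  proof
    fix y assume y: "y \<in> ?L"
    define u where "u = M *v y"
    have "u = (\<Sum>i\<in>T. u$i *\<^sub>R axis i 1)"
    proof (subst vec_eq_iff, rule allI)
      fix s
      show "u$s = (\<Sum>i\<in>T. u$i *\<^sub>R axis i 1)$s"
        using y by (cases "s \<in> T") (auto simp: u_def axis_def sum_component if_distrib sum.delta cong: if_cong)
    qed
    then have "y = ?N *v (\<Sum>i\<in>T. u$i *\<^sub>R axis i 1)"
      using matrix_inv_apply(2)[OF inv, of y] u_def by simp
    also have "\<dots> = (\<Sum>i\<in>T. u$i *\<^sub>R (?N *v axis i 1))"
      by (simp add: vec.sum matrix_vector_mult_scaleR)
    also have "\<dots> \<in> span ((\<lambda>t. ?N *v axis t 1) ` T)"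
      by (intro span_sum span_scale span_base) auto
    finally show "y \<in> span ((\<lambda>t. ?N *v axis t 1) ` T)" .
  qed
qed

lemma coord_subspace_dim:
  fixes N :: "real^'n^'n"
  assumes inj: "inj ((*v) N)"
  shows "dim (span ((\<lambda>t. N *v axis t 1) ` T)) = card T"
proof -
  have ind: "independent ((\<lambda>t. axis t (1::real)) ` T)"
    by (rule independent_mono[OF independent_Basis]) (auto simp: axis_in_Basis_iff)
  have "(\<lambda>t. N *v axis t 1) ` T = (*v) N ` ((\<lambda>t. axis t 1) ` T)" by auto
  moreover have "independent ((*v) N ` ((\<lambda>t. axis t 1) ` T))"
    by (rule linear_independent_injective_image[OF matrix_vector_mul_linear ind])
       (use inj in \<open>auto simp: inj_on_def\<close>)
  moreover have "card ((*v) N ` ((\<lambda>t. axis t (1::real)) ` T)) = card T"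
  proof -
    have "inj (\<lambda>t. N *v axis t (1::real))"
    proof (rule injI)
      fix a b assume "N *v axis a (1::real) = N *v axis b 1"
      then have "axis a (1::real) = axis b 1" using inj by (simp add: inj_def)
      then show "a = b" by (simp add: axis_eq_axis)
    qed
    then show ?thesis by (simp add: image_image card_image inj_on_subset)
  qed
  ultimately show ?thesis by (simp add: dim_eq_card_independent)
qed

lemma orth_proj_ex:
  fixes W :: "'a::euclidean_space set"
  assumes "subspace W"
  shows "\<exists>p. p \<in> W \<and> (\<forall>w\<in>W. (x - p) \<bullet> w = 0)"
proof -
  obtain y z where "y \<in> span W" "\<And>w. w \<in> span W \<Longrightarrow> orthogonal z w" "x = y + z"
    using orthogonal_subspace_decomp_exists by blast
  moreover have "span W = W" using assms by (simp add: span_eq_iff)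
  ultimately show ?thesis by (auto simp: orthogonal_def intro!: exI[of _ y])
qed

lemma orth_proj_uniq:
  fixes W :: "'a::euclidean_space set"
  assumes "subspace W" "p \<in> W" "\<forall>w\<in>W. (x - p) \<bullet> w = 0"
    "q \<in> W" "\<forall>w\<in>W. (x - q) \<bullet> w = 0"
  shows "p = q"
proof -
  have "p - q \<in> W" using assms by (simp add: subspace_diff)
  then have "(x - q) \<bullet> (p - q) - (x - p) \<bullet> (p - q) = 0" using assms by auto
  then have "(p - q) \<bullet> (p - q) = 0" by (simp add: algebra_simps inner_diff_left inner_diff_right)
  then show ?thesis by simp
qed

lemma orth_proj_eq:
  fixes W :: "'a::euclidean_space set"
  assumes "subspace W" "p \<in> W" "\<forall>w\<in>W. (x - p) \<bullet> w = 0"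
  shows "orth_proj W x = p"
  unfolding orth_proj_def
proof (rule the_equality)
  show "p \<in> W \<and> (\<forall>w\<in>W. (x - p) \<bullet> w = 0)" using assms by simp
  fix q assume "q \<in> W \<and> (\<forall>w\<in>W. (x - q) \<bullet> w = 0)"
  then show "q = p" using orth_proj_uniq[OF assms(1) _ _ assms(2,3)] by blast
qed

lemma orth_proj_props:
  fixes W :: "'a::euclidean_space set"
  assumes "subspace W"
  shows "orth_proj W x \<in> W" "\<And>w. w \<in> W \<Longrightarrow> (x - orth_proj W x) \<bullet> w = 0"
proof -
  obtain p where p: "p \<in> W" "\<forall>w\<in>W. (x - p) \<bullet> w = 0" using orth_proj_ex[OF assms] by blast
  have "orth_proj W x = p" using orth_proj_eq[OF assms p] .
  then show "orth_proj W x \<in> W" "\<And>w. w \<in> W \<Longrightarrow> (x - orth_proj W x) \<bullet> w = 0" using p by auto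
qed

lemma orth_proj_add:
  fixes W :: "'a::euclidean_space set"
  assumes "subspace W"
  shows "orth_proj W (x + y) = orth_proj W x + orth_proj W y"
proof (rule orth_proj_eq[OF assms])
  show "orth_proj W x + orth_proj W y \<in> W"
    using orth_proj_props(1)[OF assms] subspace_add[OF assms] by blast
  show "\<forall>w\<in>W. (x + y - (orth_proj W x + orth_proj W y)) \<bullet> w = 0"
  proof
    fix w assume w: "w \<in> W"
    have "x + y - (orth_proj W x + orth_proj W y) = (x - orth_proj W x) + (y - orth_proj W y)"
      by simp
    then show "(x + y - (orth_proj W x + orth_proj W y)) \<bullet> w = 0"
      using orth_proj_props(2)[OF assms w] by (simp only: inner_add_left)
  qed
qed

lemma orth_proj_best:
  fixes W :: "'a::euclidean_space set"
  assumes "subspace W" "w \<in> W"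
  shows "norm (x - orth_proj W x) \<le> norm (x - w)"
proof -
  let ?p = "orth_proj W x"
  have o: "(x - ?p) \<bullet> (?p - w) = 0"
    using orth_proj_props[OF assms(1)] assms by (simp add: subspace_diff)
  have "x - w = (x - ?p) + (?p - w)" by simp
  then have "(norm (x - w))\<^sup>2 = (norm (x - ?p))\<^sup>2 + (norm (?p - w))\<^sup>2"
    using o by (metis norm_add_Pythagorean orthogonal_def)
  then have "(norm (x - ?p))\<^sup>2 \<le> (norm (x - w))\<^sup>2" by simp
  then show ?thesis by (simp add: power2_le_iff_abs_le)
qed

lemma orth_proj_norm_le:
  fixes W :: "'a::euclidean_space set"
  assumes "subspace W"
  shows "norm (orth_proj W x) \<le> norm x"
proof -
  let ?p = "orth_proj W x"
  have o: "(x - ?p) \<bullet> ?p = 0"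
    using orth_proj_props[OF assms(1)] by simp
  have "x = (x - ?p) + ?p" by simp
  then have "(norm x)\<^sup>2 = (norm (x - ?p))\<^sup>2 + (norm ?p)\<^sup>2"
    using o by (metis norm_add_Pythagorean orthogonal_def)
  then have "(norm ?p)\<^sup>2 \<le> (norm x)\<^sup>2" by simp
  then show ?thesis by (simp add: power2_le_iff_abs_le)
qed

lemma orth_proj_compl_norm_le:
  fixes W :: "'a::euclidean_space set"
  assumes "subspace W"
  shows "norm (x - orth_proj W x) \<le> norm x"
  using orth_proj_best[OF assms subspace_0[OF assms]] by simp

lemma proj_diff_bound:
  fixes A B :: "'a::euclidean_space set"
  assumes A: "subspace A" and B: "subspace B" and e: "e \<ge> 0"
    and AB: "\<And>y. y \<in> A \<Longrightarrow> norm (y - orth_proj B y) \<le> e * norm y"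
    and BA: "\<And>y. y \<in> B \<Longrightarrow> norm (y - orth_proj A y) \<le> e * norm y"
  shows "norm (orth_proj A x - orth_proj B x) \<le> 2 * e * norm x"
proof -
  define y where "y = orth_proj A x"
  define u where "u = x - y"
  have yA: "y \<in> A" unfolding y_def using orth_proj_props[OF A] by simp
  have uA: "\<And>w. w \<in> A \<Longrightarrow> u \<bullet> w = 0" unfolding u_def y_def using orth_proj_props[OF A] by simp
  have ny: "norm y \<le> norm x" unfolding y_def by (rule orth_proj_norm_le[OF A])
  have nu: "norm u \<le> norm x" unfolding u_def y_def by (rule orth_proj_compl_norm_le[OF A])
  have split: "orth_proj A x - orth_proj B x = (y - orth_proj B y) - orth_proj B u"
    using orth_proj_add[OF B, of y u] by (simp add: u_def y_def)
  have t1: "norm (y - orth_proj B y) \<le> e * norm x"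
    using AB[OF yA] ny e by (meson mult_left_mono order_trans)
  define q where "q = orth_proj B u"
  have qB: "q \<in> B" unfolding q_def using orth_proj_props[OF B] by simp
  have "(u - q) \<bullet> q = 0" unfolding q_def using orth_proj_props[OF B] by simp
  then have qq: "q \<bullet> q = u \<bullet> q" by (simp add: inner_diff_left)
  have "orth_proj A q \<in> A" using orth_proj_props[OF A] by simp
  then have "u \<bullet> orth_proj A q = 0" using uA by simp
  then have "u \<bullet> q = u \<bullet> (q - orth_proj A q)" by (simp add: inner_diff_right)
  also have "\<dots> \<le> norm u * norm (q - orth_proj A q)" by (rule Cauchy_Schwarz_ineq2[THEN abs_le_D1])
  also have "\<dots> \<le> norm u * (e * norm q)" using BA[OF qB] by (simp add: mult_left_mono)
  finally have "(norm q)\<^sup>2 \<le> norm u * (e * norm q)" using qq by (simp add: power2_norm_eq_inner)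
  then have "norm q \<le> e * norm u"
    using e by (cases "norm q = 0") (auto simp: power2_eq_square mult.commute mult.left_commute)
  also have "\<dots> \<le> e * norm x" using nu e by (simp add: mult_left_mono)
  finally have t2: "norm q \<le> e * norm x" .
  have "norm (orth_proj A x - orth_proj B x) \<le> norm (y - orth_proj B y) + norm q"
    unfolding split q_def by (rule norm_triangle_ineq4)
  also have "\<dots> \<le> 2 * e * norm x" using t1 t2 by simp
  finally show ?thesis .
qed


lemma cmat_mult: "cmat (A ** B) = cmat A ** cmat (B::real^'k^'n)"
  by (simp add: cmat_def matrix_matrix_mult_def vec_eq_iff)

lemma cmat_one: "cmat (mat 1 :: real^'n^'n) = mat 1"
  by (simp add: cmat_def mat_def vec_eq_iff)

lemma cmat_vec: "cmat A *v (\<chi> i. complex_of_real (v$i)) = (\<chi> i. complex_of_real ((A *v v)$i))"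
  by (simp add: cmat_def matrix_vector_mult_def vec_eq_iff)

lemma cmat_apply: "(cmat A *v v)$k = (\<Sum>j\<in>UNIV. complex_of_real (A$k$j) * v$j)"
  by (simp add: cmat_def matrix_vector_mult_def)

locale setting =
  fixes P :: "real^'n^'n" and T :: "'n set" and r :: "'n \<Rightarrow> real" and lam :: real
  assumes T_ne: "T \<noteq> {}" and stoch: "row_stochastic P"
    and absorbing: "\<forall>s\<in>T. P$s$s = 1" and lam: "lam > 0"
    and rneg: "\<forall>s. s \<notin> T \<longrightarrow> r s < 0"
begin

definition a :: "'n \<Rightarrow> real" where "a i = exp (- r i / lam)"
definition g :: real where "g = Min (insert 1 ((\<lambda>i. a i - 1) ` (- T)))"
definition Mc :: "real \<Rightarrow> real^'n^'n" where
  "Mc c = (\<chi> i j. if i \<in> T then (if i = j then 1 else 0) else (if i = j then a i - c else 0) - P$i$j)"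
definition B :: "real \<Rightarrow> real^'n^'n" where "B \<delta> = R_mat T r lam \<delta> - P"
definition cc :: "real \<Rightarrow> real" where "cc \<delta> = exp (\<delta> / lam) - 1"
definition W :: "real \<Rightarrow> (real^'n) set" where "W c = {y. \<forall>s. s \<notin> T \<longrightarrow> (Mc c *v y)$s = 0}"

lemma P_nonneg: "P$i$j \<ge> 0" using stoch by (simp add: row_stochastic_def)
lemma P_rowsum: "(\<Sum>j\<in>UNIV. P$i$j) = 1" using stoch by (simp add: row_stochastic_def)

lemma P_off: "(\<Sum>j\<in>UNIV-{i}. P$i$j) = 1 - P$i$i"
  using P_rowsum[of i] by (simp add: sum.remove[of UNIV i])

lemma P_T: assumes "s \<in> T" shows "P$s$j = (if j = s then 1 else 0)"
proof -
  have "(\<Sum>j\<in>UNIV-{s}. P$s$j) = 0" using P_off[of s] absorbing assms by simp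
  then have "\<forall>j\<in>UNIV-{s}. P$s$j = 0"
    using sum_nonneg_eq_0_iff[of "UNIV-{s}" "\<lambda>j. P$s$j"] P_nonneg by auto
  then show ?thesis using absorbing assms by auto
qed

lemma a_gt: assumes "i \<notin> T" shows "a i > 1"
proof -
  have "r i < 0" using rneg assms by simp
  then have "r i / lam < 0" using lam by (simp add: divide_less_0_iff)
  then have "- r i / lam > 0" by simp
  then show ?thesis unfolding a_def by simp
qed

lemma g_props: "g > 0" "g \<le> 1" "\<And>i. i \<notin> T \<Longrightarrow> g \<le> a i - 1"
proof -
  have fin: "finite (insert 1 ((\<lambda>i. a i - 1) ` (- T)))" by simp
  show "g > 0" unfolding g_def using fin a_gt by (subst Min_gr_iff) auto
  show "g \<le> 1" unfolding g_def using fin by (intro Min_le) auto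
  show "\<And>i. i \<notin> T \<Longrightarrow> g \<le> a i - 1" unfolding g_def using fin by (intro Min_le) auto
qed

lemma cc_pos: "\<delta> > 0 \<Longrightarrow> cc \<delta> > 0"
  unfolding cc_def using lam by (simp add: divide_pos_pos)

lemma B_entry: "B \<delta> $i$j = (if i = j then (if i \<in> T then exp (\<delta>/lam) else a i) else 0) - P$i$j"
  by (simp add: B_def R_mat_def reward_delta_def a_def)

lemma Mc_entry: "Mc c $s$j = (if s \<in> T then (if s = j then 1 else 0) else (if s = j then a s - c else 0) - P$s$j)"
  by (simp add: Mc_def)

lemma Mc_apply: "(Mc c *v y)$s = (if s \<in> T then y$s else (a s - c) * y$s - (\<Sum>j\<in>UNIV. P$s$j * y$j))"
proof (cases "s \<in> T")
  case True
  have "(Mc c *v y)$s = (\<Sum>j\<in>UNIV. if j = s then y$s else 0)"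
    unfolding matrix_vector_mult_def vec_lambda_beta by (rule sum.cong) (auto simp: Mc_entry True)
  then show ?thesis using True by simp
next
  case False
  have "(Mc c *v y)$s = (\<Sum>j\<in>UNIV. (if j = s then (a s - c) * y$s else 0) - P$s$j * y$j)"
    unfolding matrix_vector_mult_def vec_lambda_beta by (rule sum.cong) (auto simp: Mc_entry False algebra_simps)
  also have "\<dots> = (a s - c) * y$s - (\<Sum>j\<in>UNIV. P$s$j * y$j)"
    by (simp add: sum_subtractf)
  finally show ?thesis using False by simp
qed

lemma B_apply: "(B \<delta> *v y)$s = (if s \<in> T then cc \<delta> * y$s else a s * y$s - (\<Sum>j\<in>UNIV. P$s$j * y$j))"
proof (cases "s \<in> T")
  case True
  have "(B \<delta> *v y)$s = (\<Sum>j\<in>UNIV. if j = s then cc \<delta> * y$s else 0)"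
    unfolding matrix_vector_mult_def vec_lambda_beta by (rule sum.cong) (auto simp: B_entry True P_T cc_def algebra_simps)
  then show ?thesis using True by simp
next
  case False
  have "(B \<delta> *v y)$s = (\<Sum>j\<in>UNIV. (if j = s then a s * y$s else 0) - P$s$j * y$j)"
    unfolding matrix_vector_mult_def vec_lambda_beta by (rule sum.cong) (auto simp: B_entry False algebra_simps)
  also have "\<dots> = a s * y$s - (\<Sum>j\<in>UNIV. P$s$j * y$j)"
    by (simp add: sum_subtractf)
  finally show ?thesis using False by simp
qed

lemma B_dd: assumes "\<delta> > 0" shows "B \<delta> $i$i - (\<Sum>j\<in>UNIV-{i}. \<bar>B \<delta> $i$j\<bar>) \<ge> min (cc \<delta>) g"
proof (cases "i \<in> T")
  case True
  have "(\<Sum>j\<in>UNIV-{i}. \<bar>B \<delta> $i$j\<bar>) = 0"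
    by (rule sum.neutral) (use True in \<open>auto simp: B_entry P_T[OF True]\<close>)
  then show ?thesis using True by (simp add: B_entry P_T[OF True] cc_def)
next
  case False
  have "(\<Sum>j\<in>UNIV-{i}. \<bar>B \<delta> $i$j\<bar>) = (\<Sum>j\<in>UNIV-{i}. P$i$j)"
    by (rule sum.cong) (auto simp: B_entry P_nonneg)
  then show ?thesis using False P_off[of i] g_props(3)[OF False] by (simp add: B_entry)
qed

lemma Mc_dd: assumes "0 \<le> c" "c \<le> g/2" shows "Mc c $i$i - (\<Sum>j\<in>UNIV-{i}. \<bar>Mc c $i$j\<bar>) \<ge> g/2"
proof (cases "i \<in> T")
  case True
  have "(\<Sum>j\<in>UNIV-{i}. \<bar>Mc c $i$j\<bar>) = 0"
    by (rule sum.neutral) (use True in \<open>auto simp: Mc_def\<close>)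
  then show ?thesis using True g_props by (simp add: Mc_def)
next
  case False
  have "(\<Sum>j\<in>UNIV-{i}. \<bar>Mc c $i$j\<bar>) = (\<Sum>j\<in>UNIV-{i}. P$i$j)"
    by (rule sum.cong) (use False in \<open>auto simp: Mc_def P_nonneg\<close>)
  then show ?thesis using False P_off[of i] g_props(3)[OF False] assms by (simp add: Mc_def)
qed

lemma B_inv: "\<delta> > 0 \<Longrightarrow> invertible (B \<delta>)"
  by (rule dd_inj[OF _ B_dd]) (auto simp: cc_pos g_props)

lemma Mc_inv: "0 \<le> c \<Longrightarrow> c \<le> g/2 \<Longrightarrow> invertible (Mc c)"
  by (rule dd_inj[OF _ Mc_dd]) (auto simp: g_props)

lemma W_span: "0 \<le> c \<Longrightarrow> c \<le> g/2 \<Longrightarrow> W c = span ((\<lambda>t. matrix_inv (Mc c) *v axis t 1) ` T)"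
  unfolding W_def by (rule coord_subspace[OF Mc_inv])

lemma W_subspace: "0 \<le> c \<Longrightarrow> c \<le> g/2 \<Longrightarrow> subspace (W c)"
  using W_span by simp

lemma inv_inj: "invertible M \<Longrightarrow> inj ((*v) (matrix_inv (M::real^'n^'n)))"
  by (metis injI matrix_inv_apply(1))

lemma W_dim: "0 \<le> c \<Longrightarrow> c \<le> g/2 \<Longrightarrow> dim (W c) = card T"
  using W_span coord_subspace_dim[OF inv_inj[OF Mc_inv]] by simp

lemma Z_B: "Z_mat T r lam P \<delta> = matrix_inv (B \<delta>)"
  by (simp add: Z_mat_def B_def)

lemma cols_eq: assumes "\<delta> > 0"
  shows "span ((\<lambda>j. column j (Z_mat T r lam P \<delta>)) ` T) = W 0"
proof -
  have "W 0 = {y. \<forall>s. s \<notin> T \<longrightarrow> (B \<delta> *v y)$s = 0}"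
    unfolding W_def by (simp add: B_apply Mc_apply)
  also have "\<dots> = span ((\<lambda>t. matrix_inv (B \<delta>) *v axis t 1) ` T)"
    by (rule coord_subspace[OF B_inv[OF assms]])
  finally show ?thesis by (simp add: Z_B matrix_vector_mult_basis)
qed

lemma cols_dim: assumes "\<delta> > 0"
  shows "dim (span ((\<lambda>j. column j (Z_mat T r lam P \<delta>)) ` T)) = card T"
  using coord_subspace_dim[OF inv_inj[OF B_inv[OF assms]], of T]
  by (simp add: Z_B matrix_vector_mult_basis)

lemma BMc: "s \<notin> T \<Longrightarrow> (Mc c *v y)$s = (B \<delta> *v y)$s - c * y$s"
  by (simp add: B_apply Mc_apply algebra_simps)

lemma B_eig: assumes "\<delta> > 0"
  shows "(B \<delta> *v y = cc \<delta> *\<^sub>R y) \<longleftrightarrow> y \<in> W (cc \<delta>)"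
proof
  assume "B \<delta> *v y = cc \<delta> *\<^sub>R y"
  then have "\<And>s. (B \<delta> *v y)$s = cc \<delta> * y$s" by simp
  then show "y \<in> W (cc \<delta>)" unfolding W_def by (simp add: BMc[where \<delta>=\<delta>])
next
  assume "y \<in> W (cc \<delta>)"
  then have h: "\<And>s. s \<notin> T \<Longrightarrow> (Mc (cc \<delta>) *v y)$s = 0" unfolding W_def by simp
  have "(B \<delta> *v y)$s = cc \<delta> * y$s" for s
  proof (cases "s \<in> T")
    case True then show ?thesis by (simp add: B_apply)
  next
    case False
    have "(Mc (cc \<delta>) *v y)$s = (B \<delta> *v y)$s - cc \<delta> * y$s" by (rule BMc[OF False])
    then show ?thesis using h[OF False] by simp
  qed
  then show "B \<delta> *v y = cc \<delta> *\<^sub>R y" by (simp add: vec_eq_iff)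
qed

lemma eig_eq: assumes "\<delta> > 0"
  shows "eigenspace (Z_mat T r lam P \<delta>) (1 / cc \<delta>) = W (cc \<delta>)"
proof -
  let ?Z = "Z_mat T r lam P \<delta>"
  have c: "cc \<delta> > 0" using cc_pos assms by simp
  have "?Z *v y = (1 / cc \<delta>) *\<^sub>R y \<longleftrightarrow> B \<delta> *v y = cc \<delta> *\<^sub>R y" for y
  proof
    assume h: "?Z *v y = (1 / cc \<delta>) *\<^sub>R y"
    have "y = B \<delta> *v (?Z *v y)" using matrix_inv_apply(1)[OF B_inv[OF assms]] by (simp add: Z_B)
    also have "\<dots> = (1 / cc \<delta>) *\<^sub>R (B \<delta> *v y)" by (simp add: h matrix_vector_mult_scaleR)
    finally have "y = (1 / cc \<delta>) *\<^sub>R (B \<delta> *v y)" .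
    then have "cc \<delta> *\<^sub>R y = cc \<delta> *\<^sub>R ((1 / cc \<delta>) *\<^sub>R (B \<delta> *v y))" by simp
    then show "B \<delta> *v y = cc \<delta> *\<^sub>R y" using c by simp
  next
    assume h: "B \<delta> *v y = cc \<delta> *\<^sub>R y"
    have "y = ?Z *v (B \<delta> *v y)" using matrix_inv_apply(2)[OF B_inv[OF assms]] by (simp add: Z_B)
    also have "\<dots> = cc \<delta> *\<^sub>R (?Z *v y)" by (simp add: h matrix_vector_mult_scaleR)
    finally have "y = cc \<delta> *\<^sub>R (?Z *v y)" .
    then have "(1 / cc \<delta>) *\<^sub>R y = (1 / cc \<delta>) *\<^sub>R (cc \<delta> *\<^sub>R (?Z *v y))" by simp
    then show "?Z *v y = (1 / cc \<delta>) *\<^sub>R y" using c by simp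
  qed
  then show ?thesis unfolding eigenspace_def using B_eig[OF assms] by auto
qed

lemma W_approx:
  assumes c1: "0 \<le> c1" "c1 \<le> g/2" and c2: "0 \<le> c2" "c2 \<le> g/2" and y: "y \<in> W c1"
  shows "norm (y - orth_proj (W c2) y) \<le> (2 * sqrt (real CARD('n)) / g) * \<bar>c2 - c1\<bar> * norm y"
proof -
  define D where "D = (\<chi> s. if s \<in> T then 0 else y$s)"
  define z where "z = matrix_inv (Mc c2) *v ((c2 - c1) *\<^sub>R D)"
  have Mz: "Mc c2 *v z = (c2 - c1) *\<^sub>R D"
    unfolding z_def by (rule matrix_inv_apply(1)[OF Mc_inv[OF c2]])
  have yW: "\<forall>s. s \<notin> T \<longrightarrow> (Mc c1 *v y) $ s = 0" using y unfolding W_def by simp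
  have "y + z \<in> W c2"
    unfolding W_def
  proof (intro CollectI allI impI)
    fix s assume s: "s \<notin> T"
    then have "(Mc c1 *v y) $ s = 0" using yW by simp
    moreover have "(Mc c2 *v z)$s = (c2 - c1) * y$s" using Mz s by (simp add: D_def)
    ultimately show "(Mc c2 *v (y + z)) $ s = 0"
      using s by (simp add: matrix_vector_right_distrib Mc_apply algebra_simps)
  qed
  then have "norm (y - orth_proj (W c2) y) \<le> norm (y - (y + z))"
    by (rule orth_proj_best[OF W_subspace[OF c2]])
  also have "\<dots> = norm z" by simp
  also have "\<dots> \<le> (2 * sqrt (real CARD('n)) / g) * \<bar>c2 - c1\<bar> * norm y"
  proof -
    have gp: "g/2 > 0" using g_props by simp
    have "g/2 * norm z \<le> sqrt (real CARD('n)) * norm (Mc c2 *v z)"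
      by (rule dd_lower[OF gp Mc_dd[OF c2]])
    also have "norm (Mc c2 *v z) = \<bar>c2 - c1\<bar> * norm D" by (simp add: Mz)
    also have "norm D \<le> norm y"
      by (rule norm_le_componentwise_cart) (simp add: D_def)
    finally have "g/2 * norm z \<le> sqrt (real CARD('n)) * (\<bar>c2 - c1\<bar> * norm y)"
      by (simp add: mult_left_mono)
    then show ?thesis using g_props(1) by (simp add: field_simps)
  qed
  finally show ?thesis .
qed

lemma eig_mu: assumes d: "\<delta> > 0" and cg: "cc \<delta> \<le> g/2"
  shows "is_eigenvalue (Z_mat T r lam P \<delta>) (complex_of_real (1 / cc \<delta>))"
proof -
  let ?Z = "Z_mat T r lam P \<delta>"
  let ?c = "cc \<delta>"
  have c0: "0 \<le> ?c" using cc_pos[OF d] by simp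
  obtain t where t: "t \<in> T" using T_ne by blast
  define v where "v = matrix_inv (Mc ?c) *v axis t 1"
  have "v \<in> W ?c" unfolding W_span[OF c0 cg] v_def using t by (intro span_base) auto
  then have "v \<in> eigenspace ?Z (1 / ?c)" using eig_eq[OF d] by simp
  then have Zv: "?Z *v v = (1 / ?c) *\<^sub>R v" by (simp add: eigenspace_def)
  have "Mc ?c *v v = axis t 1" unfolding v_def by (rule matrix_inv_apply(1)[OF Mc_inv[OF c0 cg]])
  then have vne: "v \<noteq> 0" by (auto simp: axis_eq_0_iff)
  define vc where "vc = (\<chi> i. complex_of_real (v$i))"
  have "vc \<noteq> 0" using vne by (auto simp: vc_def vec_eq_iff)
  moreover have "cmat ?Z *v vc = complex_of_real (1 / ?c) *s vc"
    unfolding vc_def cmat_vec Zv by (simp add: vec_eq_iff)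
  ultimately show ?thesis unfolding is_eigenvalue_def by blast
qed

lemma eig_other: assumes d: "\<delta> > 0" and cg: "cc \<delta> < g"
  and ev: "is_eigenvalue (Z_mat T r lam P \<delta>) z" and zne: "z \<noteq> complex_of_real (1 / cc \<delta>)"
  shows "cmod z < 1 / cc \<delta>"
proof -
  let ?Z = "Z_mat T r lam P \<delta>"
  let ?c = "cc \<delta>"
  have c0: "0 < ?c" using cc_pos[OF d] by simp
  obtain v where vne: "v \<noteq> 0" and ev: "cmat ?Z *v v = z *s v"
    using ev unfolding is_eigenvalue_def by blast
  let ?CB = "cmat (B \<delta>)"
  have "?CB ** cmat ?Z = mat 1"
    using matrix_inv_props(1)[OF B_inv[OF d]] by (simp add: Z_B cmat_mult[symmetric] cmat_one)
  then have "v = ?CB *v (cmat ?Z *v v)" by (simp add: matrix_vector_mul_assoc)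
  also have "\<dots> = z *s (?CB *v v)" by (simp add: ev vector_scalar_commute)
  finally have vz: "v = z *s (?CB *v v)" .
  have z0: "z \<noteq> 0" using vz vne by auto
  define w where "w = 1 / z"
  have CBv: "?CB *v v = w *s v" using vz z0 by (simp add: w_def vec_eq_iff field_simps)
  obtain k where k: "\<And>i. norm (v$i) \<le> norm (v$k)" using exists_max_comp by blast
  have vk: "v$k \<noteq> 0"
  proof
    assume "v$k = 0"
    then have "\<And>i. v$i = 0" using k by (metis norm_le_zero_iff norm_zero)
    then show False using vne by (simp add: vec_eq_iff)
  qed
  have row: "(?CB *v v)$k = w * v$k" using CBv by simp
  have "cmod w \<ge> g"
  proof (cases "k \<in> T")
    case True
    have "(?CB *v v)$k = (\<Sum>j\<in>UNIV. if j = k then complex_of_real ?c * v$k else 0)"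
      unfolding cmat_apply by (rule sum.cong) (use True in \<open>auto simp: B_entry P_T[OF True] cc_def\<close>)
    then have "complex_of_real ?c * v$k = w * v$k" using row by auto
    then have "w = complex_of_real ?c" using vk by simp
    then have "z = complex_of_real (1 / ?c)" using z0 c0 unfolding w_def by (simp add: field_simps)
    then show ?thesis using zne by simp
  next
    case False
    have "(?CB *v v)$k = (\<Sum>j\<in>UNIV. (if j = k then complex_of_real (a k) * v$k else 0) - complex_of_real (P$k$j) * v$j)"
      unfolding cmat_apply by (rule sum.cong) (use False in \<open>auto simp: B_entry algebra_simps\<close>)
    also have "\<dots> = complex_of_real (a k) * v$k - (\<Sum>j\<in>UNIV. complex_of_real (P$k$j) * v$j)"
      by (simp add: sum_subtractf)
    finally have "(complex_of_real (a k) - w) * v$k = (\<Sum>j\<in>UNIV. complex_of_real (P$k$j) * v$j)"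
      using row by (simp add: algebra_simps)
    then have "cmod (complex_of_real (a k) - w) * cmod (v$k) = cmod (\<Sum>j\<in>UNIV. complex_of_real (P$k$j) * v$j)"
      by (metis norm_mult)
    also have "\<dots> \<le> (\<Sum>j\<in>UNIV. cmod (complex_of_real (P$k$j) * v$j))" by (rule norm_sum)
    also have "\<dots> \<le> (\<Sum>j\<in>UNIV. P$k$j * cmod (v$k))"
      by (rule sum_mono) (use k P_nonneg in \<open>auto simp: norm_mult intro: mult_left_mono\<close>)
    also have "\<dots> = cmod (v$k)" by (simp add: sum_distrib_right[symmetric] P_rowsum)
    finally have "cmod (complex_of_real (a k) - w) \<le> 1" using vk by simp
    moreover have "a k - cmod w \<le> cmod (complex_of_real (a k) - w)"
      using norm_triangle_ineq2[of "complex_of_real (a k)" w] by simp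
    ultimately show ?thesis using g_props(3)[OF False] by linarith
  qed
  then have "cmod w > ?c" using cg by simp
  then have "cmod z < 1 / ?c" using c0 z0 unfolding w_def
    by (simp add: norm_divide field_simps)
  then show ?thesis .
qed

end

lemma onorm_nonneg_le:
  fixes f :: "real^'n \<Rightarrow> real^'n"
  assumes "\<And>x. norm (f x) \<le> b * norm x"
  shows "0 \<le> onorm f" "onorm f \<le> b"
proof -
  show "onorm f \<le> b" using assms by (rule onorm_le)
  have "bdd_above (range (\<lambda>x. norm (f x) / norm x))"
  proof (rule bdd_aboveI)
    fix y assume "y \<in> range (\<lambda>x. norm (f x) / norm x)"
    then obtain x where y: "y = norm (f x) / norm x" by blast
    show "y \<le> max b 0"
    proof (cases "x = 0")
      case True then show ?thesis using y by simp
    next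
      case False
      then have "norm x > 0" by simp
      then have "norm (f x) / norm x \<le> b" using assms[of x] by (simp add: divide_le_eq)
      then show ?thesis using y by simp
    qed
  qed
  then have "norm (f 0) / norm (0::real^'n) \<le> onorm f"
    unfolding onorm_def by (rule cSUP_upper[OF UNIV_I])
  then show "0 \<le> onorm f" by simp
qed

theorem theorem3p11:
  fixes P :: "real^'n^'n" and T :: "'n set" and r :: "'n \<Rightarrow> real" and lam :: real
  assumes T_ne: "T \<noteq> {}"
    and stoch: "row_stochastic P"
    and absorbing: "\<forall>s\<in>T. P$s$s = 1"
    and lam: "lam > 0"
    and rneg: "\<forall>s. s \<notin> T \<longrightarrow> r s < 0"
  shows "(\<forall>\<delta>>0. invertible (R_mat T r lam \<delta> - P)
            \<and> dim (span ((\<lambda>j. column j (Z_mat T r lam P \<delta>)) ` T)) = card T)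
       \<and> (\<exists>\<delta>0>0. \<forall>\<delta>. 0 < \<delta> \<and> \<delta> < \<delta>0 \<longrightarrow>
            (let Z = Z_mat T r lam P \<delta>; \<mu> = 1 / (exp (\<delta> / lam) - 1) in
               is_eigenvalue Z (complex_of_real \<mu>)
             \<and> (\<forall>z. is_eigenvalue Z z \<and> z \<noteq> complex_of_real \<mu> \<longrightarrow> cmod z < \<mu>)
             \<and> dim (eigenspace Z \<mu>) = card T))
       \<and> ((\<lambda>\<delta>. onorm (\<lambda>x. orth_proj (span ((\<lambda>j. column j (Z_mat T r lam P \<delta>)) ` T)) x
                          - orth_proj (eigenspace (Z_mat T r lam P \<delta>) (1 / (exp (\<delta> / lam) - 1))) x))
          \<longlongrightarrow> 0) (at_right 0)"
proof -
  interpret S: setting P T r lam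
    using assms by unfold_locales auto
  have gp: "S.g > 0" "S.g \<le> 1" using S.g_props by auto
  define d0 where "d0 = lam * ln (1 + S.g / 2)"
  have d0: "d0 > 0" unfolding d0_def using gp lam by simp
  have small: "S.cc \<delta> < S.g / 2" if "0 < \<delta>" "\<delta> < d0" for \<delta>
  proof -
    have "\<delta> / lam < ln (1 + S.g / 2)" using that lam unfolding d0_def by (simp add: field_simps)
    then have "exp (\<delta> / lam) < exp (ln (1 + S.g / 2))" by simp
    then show ?thesis using gp unfolding S.cc_def by simp
  qed
  have mu: "1 / (exp (\<delta> / lam) - 1) = 1 / S.cc \<delta>" for \<delta> by (simp add: S.cc_def)
  have part1: "\<forall>\<delta>>0. invertible (R_mat T r lam \<delta> - P)
            \<and> dim (span ((\<lambda>j. column j (Z_mat T r lam P \<delta>)) ` T)) = card T"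
    using S.B_inv S.cols_dim by (simp add: S.B_def)
  have part2: "\<forall>\<delta>. 0 < \<delta> \<and> \<delta> < d0 \<longrightarrow>
            (let Z = Z_mat T r lam P \<delta>; \<mu> = 1 / (exp (\<delta> / lam) - 1) in
               is_eigenvalue Z (complex_of_real \<mu>)
             \<and> (\<forall>z. is_eigenvalue Z z \<and> z \<noteq> complex_of_real \<mu> \<longrightarrow> cmod z < \<mu>)
             \<and> dim (eigenspace Z \<mu>) = card T)"
  proof (intro allI impI)
    fix \<delta> assume h: "0 < \<delta> \<and> \<delta> < d0"
    then have d: "\<delta> > 0" and c: "S.cc \<delta> < S.g / 2" using small by auto
    have c0: "0 \<le> S.cc \<delta>" using S.cc_pos[OF d] by simp
    show "let Z = Z_mat T r lam P \<delta>; \<mu> = 1 / (exp (\<delta> / lam) - 1) in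
               is_eigenvalue Z (complex_of_real \<mu>)
             \<and> (\<forall>z. is_eigenvalue Z z \<and> z \<noteq> complex_of_real \<mu> \<longrightarrow> cmod z < \<mu>)
             \<and> dim (eigenspace Z \<mu>) = card T"
      unfolding Let_def mu
      using S.eig_mu[OF d] S.eig_other[OF d] S.eig_eq[OF d] S.W_dim[OF c0] c gp
      by auto
  qed
  define K where "K = 2 * sqrt (real CARD('n)) / S.g"
  have K0: "K \<ge> 0" unfolding K_def using gp by simp
  have part3: "((\<lambda>\<delta>. onorm (\<lambda>x. orth_proj (span ((\<lambda>j. column j (Z_mat T r lam P \<delta>)) ` T)) x
                          - orth_proj (eigenspace (Z_mat T r lam P \<delta>) (1 / (exp (\<delta> / lam) - 1))) x))
          \<longlongrightarrow> 0) (at_right 0)"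
  proof (rule Lim_null_comparison)
    show "\<forall>\<^sub>F \<delta> in at_right 0. norm (onorm (\<lambda>x. orth_proj (span ((\<lambda>j. column j (Z_mat T r lam P \<delta>)) ` T)) x
                          - orth_proj (eigenspace (Z_mat T r lam P \<delta>) (1 / (exp (\<delta> / lam) - 1))) x))
          \<le> 2 * (K * S.cc \<delta>)"
      unfolding eventually_at_right_field
    proof (intro exI[of _ d0] conjI allI impI)
      show "d0 > 0" by (rule d0)
      fix \<delta> assume d: "0 < \<delta>" and dd: "\<delta> < d0"
      have c: "S.cc \<delta> < S.g / 2" using small d dd by auto
      have c0: "0 \<le> S.cc \<delta>" using S.cc_pos[OF d] by simp
      have z0: "(0::real) \<le> S.g / 2" using gp by simp
      have bound: "norm (orth_proj (S.W 0) x - orth_proj (S.W (S.cc \<delta>)) x) \<le> 2 * (K * S.cc \<delta>) * norm x" for x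
      proof (rule proj_diff_bound[OF S.W_subspace[OF order_refl z0] S.W_subspace[OF c0 less_imp_le[OF c]]])
        show "0 \<le> K * S.cc \<delta>" using K0 c0 by simp
        fix y
        show "y \<in> S.W 0 \<Longrightarrow> norm (y - orth_proj (S.W (S.cc \<delta>)) y) \<le> K * S.cc \<delta> * norm y"
          using S.W_approx[OF order_refl z0 c0 less_imp_le[OF c], of y] c0 unfolding K_def by simp
        show "y \<in> S.W (S.cc \<delta>) \<Longrightarrow> norm (y - orth_proj (S.W 0) y) \<le> K * S.cc \<delta> * norm y"
          using S.W_approx[OF c0 less_imp_le[OF c] order_refl z0, of y] c0 unfolding K_def by simp
      qed
      have eqs: "span ((\<lambda>j. column j (Z_mat T r lam P \<delta>)) ` T) = S.W 0"
        "eigenspace (Z_mat T r lam P \<delta>) (1 / (exp (\<delta> / lam) - 1)) = S.W (S.cc \<delta>)"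
        using S.cols_eq[OF d] S.eig_eq[OF d] by (simp_all add: mu)
      have "0 \<le> onorm (\<lambda>x. orth_proj (S.W 0) x - orth_proj (S.W (S.cc \<delta>)) x)"
        "onorm (\<lambda>x. orth_proj (S.W 0) x - orth_proj (S.W (S.cc \<delta>)) x) \<le> 2 * (K * S.cc \<delta>)"
        using onorm_nonneg_le[OF bound] by auto
      then show "norm (onorm (\<lambda>x. orth_proj (span ((\<lambda>j. column j (Z_mat T r lam P \<delta>)) ` T)) x
                          - orth_proj (eigenspace (Z_mat T r lam P \<delta>) (1 / (exp (\<delta> / lam) - 1))) x))
          \<le> 2 * (K * S.cc \<delta>)"
        unfolding eqs by simp
    qed
    have "((\<lambda>\<delta>. 2 * (K * (exp (\<delta> / lam) - 1))) \<longlongrightarrow> 2 * (K * (exp (0 / lam) - 1))) (at_right 0)"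
      using lam by (intro tendsto_intros) auto
    then show "((\<lambda>\<delta>. 2 * (K * S.cc \<delta>)) \<longlongrightarrow> 0) (at_right 0)"
      by (simp add: S.cc_def)
  qed
  show ?thesis using part1 part2 part3 d0 by blast
qed

end
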